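(* Let $g(x,y)=\dfrac{\theta(2x)\theta(2y)}{h(x,y)}$. Then for all $x,y$ (where defined), \[ g(x,y)+g(x+\eta,y)+g(x+2\eta,y)=0 , \] and similarly $g(x,y)+g(x,y+\eta)+g(x,y+2\eta)=0$.
   Context: For $|q|<1$, $\theta_1(x;q)=2\sum_{n\ge0}(-1)^nq^{(n+1/2)^2}\sin((2n+1)x)$. Fix $p=e^{i\pi\tau}$ with $\operatorname{Im}\tau>0$, write $\theta(x)=\theta_1(x;p)$, set $\eta=\pi/3$, and $h(x,y)=\theta(\eta+x-y)\theta(\eta+x+y)\theta(\eta-x-y)\theta(\eta-x+y)$. *)

theory Defs
  imports "HOL-Analysis.Analysis"
begin

text \<open>Jacobi theta function theta_1(x; q) with nome q = exp(i pi tau), Im tau > 0.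
  The power q^((n+1/2)^2) is read as exp(i pi tau (n+1/2)^2).\<close>
definition theta1 :: "complex \<Rightarrow> complex \<Rightarrow> complex" where
  "theta1 \<tau> x = 2 * (\<Sum>n. (-1) ^ n * exp (\<i> * of_real pi * \<tau> * (of_nat n + 1/2)^2)
                         * sin ((2 * of_nat n + 1) * x))"

definition eta :: complex where
  "eta = of_real (pi / 3)"

definition hfun :: "complex \<Rightarrow> complex \<Rightarrow> complex \<Rightarrow> complex" where
  "hfun \<tau> x y = theta1 \<tau> (eta + x - y) * theta1 \<tau> (eta + x + y)
                * theta1 \<tau> (eta - x - y) * theta1 \<tau> (eta - x + y)"

definition gfun :: "complex \<Rightarrow> complex \<Rightarrow> complex \<Rightarrow> complex" where
  "gfun \<tau> x y = theta1 \<tau> (2 * x) * theta1 \<tau> (2 * y) / hfun \<tau> x y"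

end

theory Submission
  imports Defs
begin


definition sg :: "int \<Rightarrow> complex" where
  "sg k = (if odd k then (if k mod 4 = 1 then 1 else -1) else 0)"

definition fam :: "complex \<Rightarrow> complex \<Rightarrow> int \<Rightarrow> complex" where
  "fam \<tau> z k = sg k * exp (\<i> * of_real pi * \<tau> * (of_int k)^2 / 4) * exp (\<i> * of_int k * z)"

lemma quad_bound:
  fixes a b k :: real assumes "a > 0" "b \<ge> 0"
  shows "- a * k^2 + b * \<bar>k\<bar> \<le> (b+1)^2 / (4*a) - \<bar>k\<bar>"
proof -
  have "0 \<le> (2*a*\<bar>k\<bar> - (b+1))^2" by simp
  hence "0 \<le> 4*a*a*k^2 - 4*a*(b+1)*\<bar>k\<bar> + (b+1)^2"
    by (simp add: power2_eq_square algebra_simps abs_mult_self_eq)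
  hence "4*a*(- a * k^2 + b * \<bar>k\<bar> + \<bar>k\<bar>) \<le> (b+1)^2"
    by (simp add: algebra_simps)
  thus ?thesis using assms by (simp add: field_simps)
qed

lemma norm_sg: "norm (sg k) \<le> 1"
  by (simp add: sg_def)

lemma norm_fam_le:
  assumes "Im \<tau> > 0"
  shows "norm (fam \<tau> z k) \<le> exp ((\<bar>Im z\<bar>+1)^2 / (4*(pi * Im \<tau> / 4))) * exp (-1) ^ nat \<bar>k\<bar>"
proof -
  let ?a = "pi * Im \<tau> / 4" and ?b = "\<bar>Im z\<bar>"
  have a: "?a > 0" using assms by simp
  have re1: "Re (\<i> * of_real pi * \<tau> * (of_int k)^2 / 4) = - ?a * (real_of_int k)^2"
    by (simp add: power2_eq_square)
  have re2: "Re (\<i> * of_int k * z) \<le> ?b * \<bar>real_of_int k\<bar>"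
  proof -
    have "Re (\<i> * of_int k * z) = - (real_of_int k * Im z)" by simp
    also have "\<dots> \<le> \<bar>real_of_int k * Im z\<bar>" by linarith
    finally show ?thesis by (simp add: abs_mult mult.commute)
  qed
  have "norm (fam \<tau> z k) \<le> 1 * exp (- ?a * (real_of_int k)^2) * exp (?b * \<bar>real_of_int k\<bar>)"
    unfolding fam_def norm_mult norm_exp_eq_Re re1
    by (intro mult_mono norm_sg) (use re2 in auto)
  also have "\<dots> = exp (- ?a * (real_of_int k)^2 + ?b * \<bar>real_of_int k\<bar>)"
    by (simp add: mult_exp_exp algebra_simps)
  also have "\<dots> \<le> exp ((?b+1)^2 / (4*?a) - \<bar>real_of_int k\<bar>)"
    using quad_bound[OF a, of ?b "real_of_int k"] by simp
  also have "\<dots> = exp ((?b+1)^2 / (4*?a)) * exp (-1) ^ nat \<bar>k\<bar>"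
  proof -
    have "exp (- \<bar>real_of_int k\<bar>) = exp (of_nat (nat \<bar>k\<bar>) * (-1))" by simp
    also have "\<dots> = exp (-1) ^ nat \<bar>k\<bar>" by (rule exp_of_nat_mult)
    finally show ?thesis by (simp add: exp_diff exp_minus field_simps)
  qed
  finally show ?thesis .
qed

lemma geo_int_summable: "(\<lambda>k::int. exp (-1::real) ^ nat \<bar>k\<bar>) summable_on UNIV"
proof -
  have lt: "norm (exp (-1::real)) < 1" by simp
  have s1: "summable (\<lambda>n. norm (exp (-1::real) ^ n))" using lt
    by (simp add: summable_geometric)
  have s2: "summable (\<lambda>n. norm (exp (-1::real) ^ Suc n))" using lt
    by (simp add: summable_geometric)
  have A: "(\<lambda>k::int. exp (-1::real) ^ nat \<bar>k\<bar>) summable_on range int"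
    by (subst summable_on_reindex) (use s1 in \<open>auto simp: o_def intro: norm_summable_imp_summable_on\<close>)
  have B: "(\<lambda>k::int. exp (-1::real) ^ nat \<bar>k\<bar>) summable_on range (\<lambda>n. - int n - 1)"
  proof (subst summable_on_reindex)
    show "inj_on (\<lambda>n. - int n - 1) UNIV" by (auto simp: inj_on_def)
    have "(\<lambda>n. exp (-1::real) ^ Suc n) summable_on UNIV"
      using s2 by (intro norm_summable_imp_summable_on) 
    moreover have "nat \<bar>- int n - 1\<bar> = Suc n" for n by simp
    ultimately show "((\<lambda>k::int. exp (-1::real) ^ nat \<bar>k\<bar>) \<circ> (\<lambda>n. - int n - 1)) summable_on UNIV"
      by (simp add: o_def)
  qed
  have U: "range int \<union> range (\<lambda>n. - int n - 1) = (UNIV :: int set)"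
  proof -
    have "k \<in> range int \<union> range (\<lambda>n. - int n - 1)" for k :: int
    proof (cases "k \<ge> 0")
      case True thus ?thesis by (auto intro: image_eqI[of _ _ "nat k"])
    next
      case False thus ?thesis by (auto intro!: image_eqI[of _ _ "nat (-k-1)"])
    qed
    thus ?thesis by auto
  qed
  have "(\<lambda>k::int. exp (-1::real) ^ nat \<bar>k\<bar>) summable_on (range int \<union> range (\<lambda>n. - int n - 1))"
    by (rule summable_on_Un_disjoint[OF A B]) auto
  thus ?thesis using U by simp
qed

lemma fam_abs_summable:
  assumes "Im \<tau> > 0"
  shows "(\<lambda>k. norm (fam \<tau> z k)) summable_on UNIV"
proof -
  define C where "C = exp ((\<bar>Im z\<bar>+1)^2 / (4*(pi * Im \<tau> / 4)))"
  have eq: "norm (complex_of_real (C * exp (-1) ^ nat \<bar>k\<bar>)) = C * exp (-1) ^ nat \<bar>k\<bar>" for k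
    unfolding norm_of_real by (simp add: C_def)
  have g: "(\<lambda>k. norm (complex_of_real (C * exp (-1) ^ nat \<bar>k\<bar>))) summable_on UNIV"
    unfolding eq by (rule summable_on_cmult_right[OF geo_int_summable])
  have b: "norm (fam \<tau> z k) \<le> norm (complex_of_real (C * exp (-1) ^ nat \<bar>k\<bar>))" for k
    unfolding eq using norm_fam_le[OF assms, of z k] by (simp add: C_def)
  have "(\<lambda>k. norm (fam \<tau> z k)) summable_on UNIV" by (rule Infinite_Sum.abs_summable_on_comparison_test[OF g], rule b)
  thus ?thesis by simp
qed



lemma sg_pos: "sg (2 * int n + 1) = (-1) ^ n"
proof (cases "even n")
  case True then obtain m where "n = 2*m" by auto
  thus ?thesis by (simp add: sg_def)
next
  case False then obtain m where "n = 2*m+1" using oddE by blast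
  thus ?thesis by (simp add: sg_def)
qed

lemma sg_neg: "sg (- 2 * int n - 1) = - ((-1) ^ n)"
proof (cases "even n")
  case True then obtain m where m: "n = 2*m" by auto
  have "(- 2 * int n - 1) mod 4 = 3" unfolding m by presburger
  thus ?thesis using m by (simp add: sg_def)
next
  case False then obtain m where m: "n = 2*m+1" using oddE by blast
  have "(- 2 * int n - 1) mod 4 = 1" unfolding m by presburger
  thus ?thesis using m by (simp add: sg_def)
qed

lemma fam_pair:
  "fam \<tau> z (2 * int n + 1) + fam \<tau> z (- 2 * int n - 1) =
   2 * \<i> * ((-1) ^ n * exp (\<i> * of_real pi * \<tau> * (of_nat n + 1/2)^2) * sin ((2 * of_nat n + 1) * z))"
proof -
  define E where "E = exp (\<i> * of_real pi * \<tau> * (of_nat n + 1/2)^2)"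
  define w where "w = (2 * of_nat n + 1) * z"
  have q1: "\<i> * of_real pi * \<tau> * (of_int (2 * int n + 1))^2 / 4 = \<i> * of_real pi * \<tau> * (of_nat n + 1/2)^2"
    by (simp add: power2_eq_square field_simps)
  have q2: "\<i> * of_real pi * \<tau> * (of_int (- 2 * int n - 1))^2 / 4 = \<i> * of_real pi * \<tau> * (of_nat n + 1/2)^2"
    by (simp add: power2_eq_square field_simps)
  have e1: "\<i> * of_int (2 * int n + 1) * z = \<i> * w" by (simp add: w_def)
  have e2: "\<i> * of_int (- 2 * int n - 1) * z = - (\<i> * w)" by (simp add: w_def algebra_simps)
  have "fam \<tau> z (2 * int n + 1) + fam \<tau> z (- 2 * int n - 1)
      = (-1)^n * E * (exp (\<i> * w) - exp (- (\<i> * w)))"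
    unfolding fam_def sg_pos sg_neg q1 q2 e1 e2 E_def by (simp add: algebra_simps)
  also have "exp (\<i> * w) - exp (- (\<i> * w)) = 2 * \<i> * sin w"
    by (simp add: sin_exp_eq)
  finally show ?thesis by (simp add: E_def w_def algebra_simps)
qed

lemma theta_has_sum:
  assumes "Im \<tau> > 0"
  shows "(fam \<tau> z has_sum (\<i> * theta1 \<tau> z)) UNIV"
    and "summable (\<lambda>n. (-1) ^ n * exp (\<i> * of_real pi * \<tau> * (of_nat n + 1/2)^2) * sin ((2 * of_nat n + 1) * z))"
proof -
  define a where "a n = (-1) ^ n * exp (\<i> * of_real pi * \<tau> * (of_nat n + 1/2)^2) * sin ((2 * of_nat n + 1) * z)" for n :: nat
  define hP where "hP n = 2 * int n + 1" for n :: nat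
  define hN where "hN n = - 2 * int n - 1" for n :: nat
  have sumF: "fam \<tau> z summable_on UNIV"
    using fam_abs_summable[OF assms] abs_summable_summable by blast
  have injP: "inj hP" by (auto simp: inj_on_def hP_def)
  have injN: "inj hN" by (auto simp: inj_on_def hN_def)
  define SP where "SP = infsum (fam \<tau> z) (range hP)"
  define SN where "SN = infsum (fam \<tau> z) (range hN)"
  have hsP: "(fam \<tau> z has_sum SP) (range hP)"
    unfolding SP_def using summable_on_subset_banach[OF sumF] by (simp add: has_sum_infsum)
  have hsN: "(fam \<tau> z has_sum SN) (range hN)"
    unfolding SN_def using summable_on_subset_banach[OF sumF] by (simp add: has_sum_infsum)
  have nP: "((fam \<tau> z \<circ> hP) has_sum SP) UNIV" using hsP has_sum_reindex[OF injP] by blast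
  have nN: "((fam \<tau> z \<circ> hN) has_sum SN) UNIV" using hsN has_sum_reindex[OF injN] by blast
  have disj: "range hP \<inter> range hN = {}" by (auto simp: hP_def hN_def)
  have hPN: "(fam \<tau> z has_sum (SP + SN)) (range hP \<union> range hN)"
    by (rule has_sum_Un_disjoint[OF hsP hsN disj])
  have zero: "fam \<tau> z k = 0" if "k \<notin> range hP \<union> range hN" for k
  proof -
    have "even k"
    proof (rule ccontr)
      assume "odd k"
      then obtain m where m: "k = 2*m+1" using oddE by blast
      show False
      proof (cases "m \<ge> 0")
        case True
        hence "k = hP (nat m)" by (simp add: hP_def m)
        thus False using that by auto
      next
        case False
        hence "k = hN (nat (-m-1))" by (simp add: hN_def m)
        thus False using that by auto
      qed
    qed
    thus ?thesis by (simp add: fam_def sg_def)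
  qed
  show "(fam \<tau> z has_sum (\<i> * theta1 \<tau> z)) UNIV"
  proof -
    have pt: "(fam \<tau> z \<circ> hP) n + (fam \<tau> z \<circ> hN) n = 2 * \<i> * a n" for n
      using fam_pair[of \<tau> z n] by (simp add: hP_def hN_def a_def)
    have "((\<lambda>n. 2 * \<i> * a n) has_sum (SP + SN)) UNIV"
      using has_sum_add[OF nP nN] unfolding pt .
    hence "(\<lambda>n. 2 * \<i> * a n) sums (SP + SN)" by (rule has_sum_imp_sums)
    hence "(\<lambda>n. (1 / (2 * \<i>)) * (2 * \<i> * a n)) sums ((1 / (2 * \<i>)) * (SP + SN))"
      by (rule sums_mult)
    hence as: "a sums ((SP + SN) / (2 * \<i>))" by simp
    hence "theta1 \<tau> z = 2 * ((SP + SN) / (2 * \<i>))"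
      unfolding theta1_def a_def[symmetric] by (simp add: sums_unique[symmetric])
    hence th: "\<i> * theta1 \<tau> z = SP + SN" by simp
    have "(fam \<tau> z has_sum (SP + SN)) UNIV"
      using hPN by (subst (asm) has_sum_cong_neutral[where g="fam \<tau> z" and T=UNIV]) (auto simp: zero)
    thus ?thesis by (simp add: th)
  qed
  show "summable a"
  proof -
    have pt: "(fam \<tau> z \<circ> hP) n + (fam \<tau> z \<circ> hN) n = 2 * \<i> * a n" for n
      using fam_pair[of \<tau> z n] by (simp add: hP_def hN_def a_def)
    have "((\<lambda>n. 2 * \<i> * a n) has_sum (SP + SN)) UNIV"
      using has_sum_add[OF nP nN] unfolding pt .
    hence "(\<lambda>n. 2 * \<i> * a n) sums (SP + SN)" by (rule has_sum_imp_sums)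
    hence "(\<lambda>n. (1 / (2 * \<i>)) * (2 * \<i> * a n)) sums ((1 / (2 * \<i>)) * (SP + SN))"
      by (rule sums_mult)
    thus ?thesis by (auto simp: sums_iff)
  qed
qed



lemma theta_rep:
  assumes "Im \<tau> > 0"
  shows "theta1 \<tau> z = - \<i> * infsum (fam \<tau> z) UNIV"
  using infsumI[OF theta_has_sum(1)[OF assms, of z]] by simp

lemma theta_odd:
  assumes "Im \<tau> > 0"
  shows "theta1 \<tau> (- z) = - theta1 \<tau> z"
proof -
  have "(\<lambda>n. (-1) ^ n * exp (\<i> * of_real pi * \<tau> * (of_nat n + 1/2)^2) * sin ((2 * of_nat n + 1) * (- z)))
      = (\<lambda>n. - ((-1) ^ n * exp (\<i> * of_real pi * \<tau> * (of_nat n + 1/2)^2) * sin ((2 * of_nat n + 1) * z)))"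
    by (simp add: sin_minus)
  thus ?thesis unfolding theta1_def
    by (simp add: suminf_minus[OF theta_has_sum(2)[OF assms, of z]])
qed

lemma sin_shift_pi: "sin ((2 * of_nat n + 1) * (z + complex_of_real pi)) = - sin ((2 * of_nat n + 1) * z)"
proof -
  have "(2 * of_nat n + 1) * (z + complex_of_real pi) = (2 * of_nat n + 1) * z + complex_of_real (real (2*n+1) * pi)"
    by (simp add: algebra_simps)
  moreover have "sin (complex_of_real (real (2*n+1) * pi)) = 0"
    by (simp only: sin_of_real sin_npi) simp
  moreover have "cos (complex_of_real (real (2*n+1) * pi)) = -1"
    by (simp only: cos_of_real cos_npi) simp
  ultimately show ?thesis by (simp add: sin_add)
qed

lemma theta_shift:
  assumes "Im \<tau> > 0"
  shows "theta1 \<tau> (z + complex_of_real pi) = - theta1 \<tau> z"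
proof -
  have "(\<lambda>n. (-1) ^ n * exp (\<i> * of_real pi * \<tau> * (of_nat n + 1/2)^2) * sin ((2 * of_nat n + 1) * (z + complex_of_real pi)))
      = (\<lambda>n. - ((-1) ^ n * exp (\<i> * of_real pi * \<tau> * (of_nat n + 1/2)^2) * sin ((2 * of_nat n + 1) * z)))"
    by (simp add: sin_shift_pi)
  thus ?thesis unfolding theta1_def
    by (simp add: suminf_minus[OF theta_has_sum(2)[OF assms, of z]])
qed

lemma theta_refl:
  assumes "Im \<tau> > 0"
  shows "theta1 \<tau> (complex_of_real pi - z) = theta1 \<tau> z"
proof -
  have "theta1 \<tau> (complex_of_real pi - z) = theta1 \<tau> (-(z - complex_of_real pi))" by simp
  also have "\<dots> = - theta1 \<tau> (z - complex_of_real pi)" by (rule theta_odd[OF assms])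
  also have "theta1 \<tau> z = theta1 \<tau> ((z - complex_of_real pi) + complex_of_real pi)" by simp
  hence "theta1 \<tau> z = - theta1 \<tau> (z - complex_of_real pi)" using theta_shift[OF assms] by metis
  finally show ?thesis by simp
qed

lemma prod2:
  fixes f :: "'a \<Rightarrow> complex" and g :: "'b \<Rightarrow> complex"
  assumes f: "(\<lambda>x. norm (f x)) summable_on UNIV" and g: "(\<lambda>x. norm (g x)) summable_on UNIV"
  shows "(\<lambda>p. norm (f (fst p) * g (snd p))) summable_on UNIV"
    and "infsum (\<lambda>p. f (fst p) * g (snd p)) UNIV = infsum f UNIV * infsum g UNIV"
proof -
  have "(\<lambda>p. norm (f (fst p) * g (snd p))) summable_on Sigma UNIV (\<lambda>_. UNIV)"
  proof (subst Infinite_Sum.abs_summable_on_Sigma_iff, intro conjI ballI)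
    fix x
    show "(\<lambda>y. norm (f (fst (x, y)) * g (snd (x, y)))) summable_on UNIV"
      using summable_on_cmult_right[OF g, of "norm (f x)"] by (simp add: norm_mult)
  next
    have "(\<lambda>x. norm (infsum (\<lambda>y. norm (f (fst (x, y)) * g (snd (x, y)))) UNIV))
          = (\<lambda>x. norm (f x) * infsum (\<lambda>y. norm (g y)) UNIV)"
      by (simp add: norm_mult infsum_cmult_right' infsum_nonneg)
    thus "(\<lambda>x. norm (infsum (\<lambda>y. norm (f (fst (x, y)) * g (snd (x, y)))) UNIV)) summable_on UNIV"
      using summable_on_cmult_left[OF f] by simp
  qed
  thus abs: "(\<lambda>p. norm (f (fst p) * g (snd p))) summable_on UNIV" by simp
  have sm: "(\<lambda>p. f (fst p) * g (snd p)) summable_on Sigma UNIV (\<lambda>_. UNIV)"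
    using abs abs_summable_summable by auto
  have "infsum (\<lambda>p. f (fst p) * g (snd p)) (Sigma UNIV (\<lambda>_. UNIV))
        = infsum (\<lambda>x. infsum (\<lambda>y. f (fst (x,y)) * g (snd (x,y))) UNIV) UNIV"
    using infsum_Sigma_banach[OF sm] by simp
  also have "\<dots> = infsum (\<lambda>x. f x * infsum g UNIV) UNIV"
    by (simp add: infsum_cmult_right')
  also have "\<dots> = infsum f UNIV * infsum g UNIV" by (simp add: infsum_cmult_left')
  finally show "infsum (\<lambda>p. f (fst p) * g (snd p)) UNIV = infsum f UNIV * infsum g UNIV" by simp
qed



definition cf :: "int \<Rightarrow> complex" where
  "cf s = 1 - exp (\<i> * eta * of_int s) - exp (- (\<i> * eta * of_int s))"

lemma coeff_neg: "cf (- s) = cf s"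
  by (simp add: cf_def)

lemma cos_third:
  assumes "odd s" "\<not> 3 dvd s"
  shows "cos (pi / 3 * real_of_int s) = 1/2"
proof -
  obtain m r where sr: "s = 6*m + r" and r: "r = 1 \<or> r = 5"
  proof -
    have "s mod 6 = 1 \<or> s mod 6 = 5" using assms by presburger
    thus ?thesis using that[of "s div 6" "s mod 6"] by auto
  qed
  have e: "pi / 3 * real_of_int s = pi / 3 * real_of_int r + (2 * pi) * real_of_int m"
    by (simp add: sr algebra_simps)
  have "cos (pi / 3 * real_of_int s) = cos (pi / 3 * real_of_int r)"
    unfolding e cos_add by simp
  also have "\<dots> = 1/2"
  proof (cases "r = 1")
    case True thus ?thesis by (simp add: cos_60)
  next
    case False
    hence "r = 5" using r by simp
    hence e5: "pi / 3 * real_of_int r = - (pi/3) + 2 * pi" by simp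
    show ?thesis unfolding e5 cos_add by (simp add: cos_60)
  qed
  finally show ?thesis .
qed

lemma coeff_zero:
  assumes "odd s" "\<not> 3 dvd s"
  shows "cf s = 0"
proof -
  have "exp (\<i> * eta * of_int s) + exp (- (\<i> * eta * of_int s)) = 2 * cos (eta * of_int s)"
    by (simp add: cos_exp_eq mult.assoc)
  also have "eta * of_int s = complex_of_real (pi / 3 * real_of_int s)"
    by (simp add: eta_def)
  also have "cos \<dots> = complex_of_real (1/2)"
    by (simp only: cos_of_real cos_third[OF assms])
  finally show ?thesis unfolding cf_def by (simp add: algebra_simps)
qed

lemma sg_odd: "odd k \<Longrightarrow> sg k = (if k mod 4 = 1 then 1 else -1)"
  by (simp add: sg_def)

lemma sg3:
  assumes "odd k1" "odd k2" "odd k3"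
  shows "sg k1 * sg k2 * sg k3 = (if (k1+k2+k3) mod 4 = 3 then 1 else -1)"
proof -
  have m: "k mod 4 = 1 \<or> k mod 4 = 3" if "odd k" for k :: int using that by presburger
  show ?thesis using m[OF assms(1)] m[OF assms(2)] m[OF assms(3)]
    unfolding sg_odd[OF assms(1)] sg_odd[OF assms(2)] sg_odd[OF assms(3)]
    by (elim disjE) (simp_all, presburger+)
qed

definition sig :: "(int \<times> int) \<times> int \<Rightarrow> (int \<times> int) \<times> int" where
  "sig k = (case k of ((k1, k2), k3) \<Rightarrow>
     if 3 dvd (k1 - k2 - k3) then
       ((k1 - 2 * ((k1 - k2 - k3) div 3), k2 + 2 * ((k1 - k2 - k3) div 3)), k3 + 2 * ((k1 - k2 - k3) div 3))
     else k)"

lemma sig_invol: "sig (sig k) = k"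
proof -
  obtain k1 k2 k3 where k: "k = ((k1, k2), k3)" by (metis prod.collapse)
  show ?thesis
  proof (cases "3 dvd (k1 - k2 - k3)")
    case True
    then obtain t where t: "k1 - k2 - k3 = 3 * t" by blast
    have d: "(k1 - k2 - k3) div 3 = t" using t by simp
    have d2: "3 dvd (k1 - 2*t - (k2 + 2*t) - (k3 + 2*t))" using t by presburger
    have d3: "(k1 - 2*t - (k2 + 2*t) - (k3 + 2*t)) div 3 = -t" using t by presburger
    show ?thesis unfolding k sig_def using True d d2 d3 by simp
  next
    case False thus ?thesis unfolding k sig_def by simp
  qed
qed

definition GG :: "complex \<Rightarrow> complex \<Rightarrow> complex \<Rightarrow> (int \<times> int) \<times> int \<Rightarrow> complex" where
  "GG \<tau> a b k = (case k of ((k1, k2), k3) \<Rightarrow>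
     sg k1 * sg k2 * sg k3 * exp (\<i> * of_real pi * \<tau> * of_int (k1^2 + k2^2 + k3^2) / 4)
       * exp (\<i> * (of_int (k1 + k2) * a + of_int (k1 + k3) * b)) * cf (k2 + k3 - k1))"

lemma GG_sig: "GG \<tau> a b (sig k) = - GG \<tau> a b k"
proof -
  obtain k1 k2 k3 where k: "k = ((k1, k2), k3)" by (metis prod.collapse)
  show ?thesis
  proof (cases "3 dvd (k1 - k2 - k3)")
    case False
    hence sk: "sig k = k" unfolding k sig_def by simp
    have "GG \<tau> a b k = 0"
    proof (cases "odd k1 \<and> odd k2 \<and> odd k3")
      case True
      have "odd (k2 + k3 - k1)" using True by presburger
      moreover have "\<not> 3 dvd (k2 + k3 - k1)" using False by presburger
      ultimately show ?thesis unfolding k GG_def using coeff_zero by simp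
    next
      case False thus ?thesis unfolding k GG_def by (auto simp: sg_def)
    qed
    thus ?thesis using sk by simp
  next
    case True
    then obtain t where t: "k1 - k2 - k3 = 3 * t" by blast
    have d: "(k1 - k2 - k3) div 3 = t" using t by simp
    have sk: "sig k = ((k1 - 2*t, k2 + 2*t), k3 + 2*t)" unfolding k sig_def using True d by simp
    show ?thesis
    proof (cases "odd k1 \<and> odd k2 \<and> odd k3")
      case False
      hence "\<not> (odd (k1 - 2*t) \<and> odd (k2 + 2*t) \<and> odd (k3 + 2*t))" by presburger
      hence "GG \<tau> a b (sig k) = 0" unfolding sk GG_def by (auto simp: sg_def)
      moreover have "GG \<tau> a b k = 0" using False unfolding k GG_def by (auto simp: sg_def)
      ultimately show ?thesis by simp
    next
      case True
      hence o: "odd (k1 - 2*t)" "odd (k2 + 2*t)" "odd (k3 + 2*t)" by presburger+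
      have todd: "odd t" using True t by presburger
      have s1: "sg (k1 - 2*t) * sg (k2 + 2*t) * sg (k3 + 2*t) = - (sg k1 * sg k2 * sg k3)"
      proof -
        have "((k1 - 2*t) + (k2 + 2*t) + (k3 + 2*t)) mod 4 = 3 \<longleftrightarrow> \<not> ((k1+k2+k3) mod 4 = 3)"
          using True todd by presburger
        thus ?thesis unfolding sg3[OF o] using sg3[of k1 k2 k3] True by simp
      qed
      have k1e: "k1 = k2 + k3 + 3*t" using t by simp
      have q: "(k1 - 2*t)^2 + (k2 + 2*t)^2 + (k3 + 2*t)^2 = k1^2 + k2^2 + k3^2"
        unfolding k1e by (simp add: power2_eq_square algebra_simps)
      have l1: "k1 - 2*t + (k2 + 2*t) = k1 + k2" by simp
      have l2: "k1 - 2*t + (k3 + 2*t) = k1 + k3" by simp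
      have c: "k2 + 2*t + (k3 + 2*t) - (k1 - 2*t) = - (k2 + k3 - k1)" using t by simp
      have cc: "cf (k2 + 2*t + (k3 + 2*t) - (k1 - 2*t)) = cf (k2 + k3 - k1)"
        unfolding c by (rule coeff_neg)
      show ?thesis unfolding sk unfolding k GG_def using s1 q l1 l2 cc
        by (simp del: of_int_add of_int_power)
    qed
  qed
qed

lemma GG_infsum: "infsum (GG \<tau> a b) UNIV = 0"
proof -
  have bij: "bij sig" by (rule involuntory_imp_bij) (rule sig_invol)
  have "infsum (GG \<tau> a b) UNIV = infsum (\<lambda>k. GG \<tau> a b (sig k)) UNIV"
    using infsum_reindex_bij_betw[OF bij, of "GG \<tau> a b"] by simp
  also have "\<dots> = - infsum (GG \<tau> a b) UNIV"
    by (simp add: GG_sig infsum_uminus)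
  finally show ?thesis by simp
qed



lemma famprod:
  "fam \<tau> (a + b - e) k1 * fam \<tau> (a + e) k2 * fam \<tau> (b + e) k3 =
   sg k1 * sg k2 * sg k3 * exp (\<i> * of_real pi * \<tau> * of_int (k1^2 + k2^2 + k3^2) / 4)
     * exp (\<i> * (of_int (k1 + k2) * a + of_int (k1 + k3) * b)) * exp (\<i> * e * of_int (k2 + k3 - k1))"
proof -
  have "fam \<tau> (a + b - e) k1 * fam \<tau> (a + e) k2 * fam \<tau> (b + e) k3 =
        sg k1 * sg k2 * sg k3 * exp (\<i> * of_real pi * \<tau> * (of_int k1)^2 / 4 + \<i> * of_int k1 * (a + b - e)
          + (\<i> * of_real pi * \<tau> * (of_int k2)^2 / 4 + \<i> * of_int k2 * (a + e))
          + (\<i> * of_real pi * \<tau> * (of_int k3)^2 / 4 + \<i> * of_int k3 * (b + e)))"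
    unfolding fam_def exp_add by (simp add: mult_ac)
  also have "\<i> * of_real pi * \<tau> * (of_int k1)^2 / 4 + \<i> * of_int k1 * (a + b - e)
          + (\<i> * of_real pi * \<tau> * (of_int k2)^2 / 4 + \<i> * of_int k2 * (a + e))
          + (\<i> * of_real pi * \<tau> * (of_int k3)^2 / 4 + \<i> * of_int k3 * (b + e))
        = \<i> * of_real pi * \<tau> * of_int (k1^2 + k2^2 + k3^2) / 4
          + \<i> * (of_int (k1 + k2) * a + of_int (k1 + k3) * b) + \<i> * e * of_int (k2 + k3 - k1)"
    by (simp add: algebra_simps add_divide_distrib)
  finally show ?thesis unfolding exp_add by (simp add: mult_ac)
qed

lemma key:
  assumes "Im \<tau> > 0"
  shows "theta1 \<tau> (a + b) * theta1 \<tau> a * theta1 \<tau> b =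
         theta1 \<tau> (a + b - eta) * theta1 \<tau> (a + eta) * theta1 \<tau> (b + eta)
       + theta1 \<tau> (a + b + eta) * theta1 \<tau> (a - eta) * theta1 \<tau> (b - eta)"
proof -
  define S where "S z = infsum (fam \<tau> z) UNIV" for z
  define F where "F e = (\<lambda>k::(int \<times> int) \<times> int. fam \<tau> (a + b - e) (fst (fst k)) * fam \<tau> (a + e) (snd (fst k)) * fam \<tau> (b + e) (snd k))" for e
  have Fhs: "(F e has_sum (S (a + b - e) * S (a + e) * S (b + e))) UNIV" for e
  proof -
    note ab = fam_abs_summable[OF assms]
    note p12 = prod2[OF ab[of "a+b-e"] ab[of "a+e"]]
    note p123 = prod2[OF p12(1) ab[of "b+e"]]
    have eq: "F e = (\<lambda>q. fam \<tau> (a + b - e) (fst (fst q)) * fam \<tau> (a + e) (snd (fst q)) * fam \<tau> (b + e) (snd q))"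
      by (simp add: F_def)
    have sm: "F e summable_on UNIV"
      using abs_summable_summable p123(1) unfolding eq by (simp add: mult.assoc)
    have "infsum (F e) UNIV = S (a + b - e) * S (a + e) * S (b + e)"
      using p123(2) unfolding eq p12(2) S_def by simp
    thus ?thesis using sm has_sum_infsum by metis
  qed
  have th: "theta1 \<tau> (a + b - e) * theta1 \<tau> (a + e) * theta1 \<tau> (b + e) = \<i> * (S (a + b - e) * S (a + e) * S (b + e))" for e
    unfolding theta_rep[OF assms] S_def by (simp add: algebra_simps power3_eq_cube)
  have "((\<lambda>k. F 0 k + - F eta k + - F (- eta) k) has_sum
         (S (a + b - 0) * S (a + 0) * S (b + 0) + - (S (a + b - eta) * S (a + eta) * S (b + eta))
          + - (S (a + b - - eta) * S (a + - eta) * S (b + - eta)))) UNIV"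
    by (intro has_sum_add has_sum_uminusI Fhs)
  moreover have "(\<lambda>k. F 0 k + - F eta k + - F (- eta) k) = GG \<tau> a b"
  proof
    fix k :: "(int \<times> int) \<times> int"
    obtain k1 k2 k3 where k: "k = ((k1, k2), k3)" by (metis prod.collapse)
    show "F 0 k + - F eta k + - F (- eta) k = GG \<tau> a b k"
      unfolding k F_def GG_def fst_conv snd_conv famprod cf_def
      by (simp add: algebra_simps)
  qed
  ultimately have "infsum (GG \<tau> a b) UNIV = S (a + b) * S a * S b - S (a + b - eta) * S (a + eta) * S (b + eta)
          - S (a + b + eta) * S (a - eta) * S (b - eta)"
    by (simp add: infsumI)
  hence "S (a + b) * S a * S b = S (a + b - eta) * S (a + eta) * S (b + eta) + S (a + b + eta) * S (a - eta) * S (b - eta)"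
    using GG_infsum[of \<tau> a b] by (simp add: algebra_simps)
  moreover have "theta1 \<tau> (a + b) * theta1 \<tau> a * theta1 \<tau> b = \<i> * (S (a + b) * S a * S b)"
    using th[of 0] by simp
  moreover have "theta1 \<tau> (a + b + eta) * theta1 \<tau> (a - eta) * theta1 \<tau> (b - eta) = \<i> * (S (a + b + eta) * S (a - eta) * S (b - eta))"
    using th[of "-eta"] by simp
  ultimately show ?thesis using th[of eta] by (simp add: algebra_simps)
qed



lemma eta3: "complex_of_real pi = 3 * eta"
  by (simp add: eta_def)

lemma thr: "Im \<tau> > 0 \<Longrightarrow> u = complex_of_real pi - v \<Longrightarrow> theta1 \<tau> u = theta1 \<tau> v"
  using theta_refl by blast
lemma tho: "Im \<tau> > 0 \<Longrightarrow> u = - v \<Longrightarrow> theta1 \<tau> u = - theta1 \<tau> v"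
  using theta_odd by blast
lemma ths: "Im \<tau> > 0 \<Longrightarrow> u = v + complex_of_real pi \<Longrightarrow> theta1 \<tau> u = - theta1 \<tau> v"
  using theta_shift by blast

lemma part1:
  assumes t: "Im \<tau> > 0"
    and n0: "hfun \<tau> x y \<noteq> 0" and n1: "hfun \<tau> (x + eta) y \<noteq> 0" and n2: "hfun \<tau> (x + 2 * eta) y \<noteq> 0"
  shows "gfun \<tau> x y + gfun \<tau> (x + eta) y + gfun \<tau> (x + 2 * eta) y = 0"
proof -
  define A where "A = theta1 \<tau> (eta + x - y) * theta1 \<tau> (eta + x + y)"
  define B where "B = theta1 \<tau> (eta - x - y) * theta1 \<tau> (eta - x + y)"
  define C where "C = theta1 \<tau> (x + y) * theta1 \<tau> (x - y)"
  have h0: "hfun \<tau> x y = A * B" by (simp add: hfun_def A_def B_def mult_ac)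
  have h1: "hfun \<tau> (x + eta) y = B * C"
  proof -
    have 1: "theta1 \<tau> (eta + (x + eta) - y) = theta1 \<tau> (eta - x + y)"
      by (rule thr[OF t]) (simp add: eta3 algebra_simps)
    have 2: "theta1 \<tau> (eta + (x + eta) + y) = theta1 \<tau> (eta - x - y)"
      by (rule thr[OF t]) (simp add: eta3 algebra_simps)
    have 3: "theta1 \<tau> (eta - (x + eta) - y) = - theta1 \<tau> (x + y)"
      by (rule tho[OF t]) (simp add: algebra_simps)
    have 4: "theta1 \<tau> (eta - (x + eta) + y) = - theta1 \<tau> (x - y)"
      by (rule tho[OF t]) (simp add: algebra_simps)
    show ?thesis unfolding hfun_def 1 2 3 4 B_def C_def by (simp add: mult_ac)
  qed
  have h2: "hfun \<tau> (x + 2 * eta) y = C * A"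
  proof -
    have 1: "theta1 \<tau> (eta + (x + 2 * eta) - y) = - theta1 \<tau> (x - y)"
      by (rule ths[OF t]) (simp add: eta3 algebra_simps)
    have 2: "theta1 \<tau> (eta + (x + 2 * eta) + y) = - theta1 \<tau> (x + y)"
      by (rule ths[OF t]) (simp add: eta3 algebra_simps)
    have 3: "theta1 \<tau> (eta - (x + 2 * eta) - y) = - theta1 \<tau> (eta + x + y)"
      by (rule tho[OF t]) (simp add: algebra_simps)
    have 4: "theta1 \<tau> (eta - (x + 2 * eta) + y) = - theta1 \<tau> (eta + x - y)"
      by (rule tho[OF t]) (simp add: algebra_simps)
    show ?thesis unfolding hfun_def 1 2 3 4 A_def C_def by (simp add: mult_ac)
  qed
  have nA: "A \<noteq> 0" and nB: "B \<noteq> 0" using n0 h0 by auto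
  have nC: "C \<noteq> 0" using n1 h1 by auto
  have g1: "theta1 \<tau> (2 * (x + eta)) = theta1 \<tau> (eta - 2 * x)"
    by (rule thr[OF t]) (simp add: eta3 algebra_simps)
  have g2: "theta1 \<tau> (2 * (x + 2 * eta)) = - theta1 \<tau> (2 * x + eta)"
    by (rule ths[OF t]) (simp add: eta3 algebra_simps)
  have K: "theta1 \<tau> (2 * x) * C = - theta1 \<tau> (eta - 2 * x) * A + theta1 \<tau> (2 * x + eta) * B"
  proof -
    have k: "theta1 \<tau> ((x + y) + (x - y)) * theta1 \<tau> (x + y) * theta1 \<tau> (x - y) =
         theta1 \<tau> ((x + y) + (x - y) - eta) * theta1 \<tau> ((x + y) + eta) * theta1 \<tau> ((x - y) + eta)
       + theta1 \<tau> ((x + y) + (x - y) + eta) * theta1 \<tau> ((x + y) - eta) * theta1 \<tau> ((x - y) - eta)"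
      by (rule key[OF t])
    have e1: "(x + y) + (x - y) = 2 * x" by simp
    have e2: "theta1 \<tau> (2 * x - eta) = - theta1 \<tau> (eta - 2 * x)"
      by (rule tho[OF t]) simp
    have e3: "theta1 \<tau> ((x + y) + eta) * theta1 \<tau> ((x - y) + eta) = A"
      unfolding A_def by (simp add: algebra_simps mult_ac)
    have e4: "theta1 \<tau> ((x + y) - eta) = - theta1 \<tau> (eta - x - y)"
      by (rule tho[OF t]) simp
    have e5: "theta1 \<tau> ((x - y) - eta) = - theta1 \<tau> (eta - x + y)"
      by (rule tho[OF t]) simp
    have "theta1 \<tau> (2 * x) * C = - theta1 \<tau> (eta - 2 * x) * (theta1 \<tau> ((x + y) + eta) * theta1 \<tau> ((x - y) + eta))
        + theta1 \<tau> (2 * x + eta) * B"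
      using k unfolding e1 e2 e4 e5 C_def B_def by (simp add: algebra_simps)
    thus ?thesis unfolding e3 .
  qed
  have "gfun \<tau> x y + gfun \<tau> (x + eta) y + gfun \<tau> (x + 2 * eta) y
      = theta1 \<tau> (2 * y) / (A * B * C) * (theta1 \<tau> (2 * x) * C + theta1 \<tau> (eta - 2 * x) * A - theta1 \<tau> (2 * x + eta) * B)"
    unfolding gfun_def h0 h1 h2 g1 g2 using nA nB nC by (simp add: field_simps)
  also have "\<dots> = 0" unfolding K by simp
  finally show ?thesis .
qed

lemma hfun_sym: "hfun \<tau> x y = hfun \<tau> y x"
  unfolding hfun_def by (simp add: algebra_simps mult_ac)

lemma gfun_sym: "gfun \<tau> x y = gfun \<tau> y x"
  unfolding gfun_def by (simp add: hfun_sym mult_ac)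

theorem mainTheorem5:
  fixes \<tau> x y :: complex
  assumes "Im \<tau> > 0"
  shows "(hfun \<tau> x y \<noteq> 0 \<and> hfun \<tau> (x + eta) y \<noteq> 0 \<and> hfun \<tau> (x + 2 * eta) y \<noteq> 0
            \<longrightarrow> gfun \<tau> x y + gfun \<tau> (x + eta) y + gfun \<tau> (x + 2 * eta) y = 0)
       \<and> (hfun \<tau> x y \<noteq> 0 \<and> hfun \<tau> x (y + eta) \<noteq> 0 \<and> hfun \<tau> x (y + 2 * eta) \<noteq> 0
            \<longrightarrow> gfun \<tau> x y + gfun \<tau> x (y + eta) + gfun \<tau> x (y + 2 * eta) = 0)"
proof (intro conjI impI)
  assume "hfun \<tau> x y \<noteq> 0 \<and> hfun \<tau> (x + eta) y \<noteq> 0 \<and> hfun \<tau> (x + 2 * eta) y \<noteq> 0"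
  thus "gfun \<tau> x y + gfun \<tau> (x + eta) y + gfun \<tau> (x + 2 * eta) y = 0"
    using part1[OF assms] by blast
next
  assume "hfun \<tau> x y \<noteq> 0 \<and> hfun \<tau> x (y + eta) \<noteq> 0 \<and> hfun \<tau> x (y + 2 * eta) \<noteq> 0"
  hence "hfun \<tau> y x \<noteq> 0 \<and> hfun \<tau> (y + eta) x \<noteq> 0 \<and> hfun \<tau> (y + 2 * eta) x \<noteq> 0"
    by (simp add: hfun_sym[of \<tau> x])
  hence "gfun \<tau> y x + gfun \<tau> (y + eta) x + gfun \<tau> (y + 2 * eta) x = 0"
    using part1[OF assms] by blast
  thus "gfun \<tau> x y + gfun \<tau> x (y + eta) + gfun \<tau> x (y + 2 * eta) = 0"
    by (simp add: gfun_sym[of \<tau> x])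
qed

end
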